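(* Let $\mathcal{A}$ be a finite set with $A=|\mathcal{A}|$, $\mathbb{X}$ a discrete abelian group, $\mathfrak{F}:\mathcal{A}^{\mathbb{X}}\to\mathcal{A}^{\mathbb{X}}$ a cellular automaton with finite symmetric neighbourhood $\mathbb{B}$ of the identity, $B=|\mathbb{B}|$, and local map $\mathfrak{f}:\mathcal{A}^{\mathbb{B}}\to\mathcal{A}$. If $\phi:\mathcal{A}\to\mathbb{R}$ is conserved by $\mathfrak{F}$, then $$\sum_{\mathbf{a}\in\mathcal{A}^{\mathbb{B}}}\phi(\mathfrak{f}(\mathbf{a}))=A^{B-1}\sum_{a\in\mathcal{A}}\phi(a).$$ In particular, if $\mathcal{A}=\{0,1,\dots,A-1\}\subset\mathbb{N}$ and $\phi(a)=a$ for all $a$, then $\sum_{\mathbf{a}\in\mathcal{A}^{\mathbb{B}}}\mathfrak{f}(\mathbf{a})=\tfrac12A^B(A-1)$.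
   Context: The CA is given by $\mathfrak{F}(\mathbf{a})_{\mathsf{x}}=\mathfrak{f}(\mathbf{a}|_{\mathbb{B}+\mathsf{x}})$. Vacuum states are $\phi^{-1}\{0\}$; $\phi$ is conserved by $\mathfrak{F}$ if for every configuration $\mathbf{a}$ with only finitely many non-vacuum sites, $\mathfrak{F}(\mathbf{a})$ also has finitely many non-vacuum sites and $\sum_{\mathsf{x}}\phi(\mathfrak{F}(\mathbf{a})_{\mathsf{x}})=\sum_{\mathsf{x}}\phi(a_{\mathsf{x}})$.
   Formalization: An extra hypothesis requires that either $\mathbb{X}$ is finite or $\phi$ has a vacuum state in $\mathcal{A}$, i.e. $\phi(v)=0$ for some $v\in\mathcal{A}$. The paper assumes this as well. *)

theory Defs
  imports Complex_Main "HOL-Library.FuncSet"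
begin

definition ca :: "(('x::ab_group_add \<Rightarrow> 'a) \<Rightarrow> 'a) \<Rightarrow> 'x set \<Rightarrow> ('x \<Rightarrow> 'a) \<Rightarrow> 'x \<Rightarrow> 'a" where
  "ca f B c = (\<lambda>x. f (restrict (\<lambda>b. c (b + x)) B))"

definition conserved :: "'a set \<Rightarrow> (('x::ab_group_add \<Rightarrow> 'a) \<Rightarrow> 'a) \<Rightarrow> 'x set \<Rightarrow> ('a \<Rightarrow> real) \<Rightarrow> bool" where
  "conserved Al f B \<phi> \<longleftrightarrow>
     (\<forall>c. (\<forall>x. c x \<in> Al) \<and> finite {x. \<phi> (c x) \<noteq> 0} \<longrightarrow>
        finite {x. \<phi> (ca f B c x) \<noteq> 0} \<and>
        (\<Sum>x\<in>{x. \<phi> (ca f B c x) \<noteq> 0}. \<phi> (ca f B c x)) = (\<Sum>x\<in>{x. \<phi> (c x) \<noteq> 0}. \<phi> (c x)))"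

end

theory Submission
  imports Defs
begin


lemma sum_PiE_restrict_aux:
  fixes g :: "('x \<Rightarrow> 'a) \<Rightarrow> real"
  assumes "finite R" "R \<inter> T = {}"
  shows "(\<Sum>w\<in>PiE (T \<union> R) (\<lambda>_. Al). g (restrict w T))
         = real (card Al) ^ card R * (\<Sum>p\<in>PiE T (\<lambda>_. Al). g p)"
  using assms
proof (induction R rule: finite_induct)
  case empty
  show ?case
    by (auto intro!: sum.cong simp: PiE_restrict)
next
  case (insert y R)
  have yT: "y \<notin> T" "y \<notin> R" using insert by auto
  have eq: "T \<union> insert y R = insert y (T \<union> R)" by auto
  have nin: "y \<notin> T \<union> R" using yT by auto
  have "(\<Sum>w\<in>PiE (T \<union> insert y R) (\<lambda>_. Al). g (restrict w T))
      = (\<Sum>w\<in>(\<lambda>(a, h). h(y := a)) ` (Al \<times> PiE (T \<union> R) (\<lambda>_. Al)). g (restrict w T))"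
    unfolding eq PiE_insert_eq ..
  also have "\<dots> = (\<Sum>(a,h)\<in>Al \<times> PiE (T \<union> R) (\<lambda>_. Al). g (restrict (h(y:=a)) T))"
    by (subst sum.reindex[OF inj_combinator[OF nin]]) (simp add: case_prod_beta)
  also have "\<dots> = (\<Sum>(a,h)\<in>Al \<times> PiE (T \<union> R) (\<lambda>_. Al). g (restrict h T))"
  proof (intro sum.cong refl)
    fix z assume "z \<in> Al \<times> PiE (T \<union> R) (\<lambda>_. Al)"
    have r: "\<And>a (h::'x \<Rightarrow> 'a). restrict (h(y:=a)) T = restrict h T" using yT by (auto simp: restrict_def)
    obtain a h where "z = (a, h)" by (cases z)
    then show "(case z of (a, h) \<Rightarrow> g (restrict (h(y := a)) T)) = (case z of (a, h) \<Rightarrow> g (restrict h T))"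
      using r by (simp only: case_prod_conv)
  qed
  also have "\<dots> = (\<Sum>a\<in>Al. \<Sum>h\<in>PiE (T \<union> R) (\<lambda>_. Al). g (restrict h T))"
    by (rule sum.cartesian_product[symmetric])
  also have "\<dots> = real (card Al) * (\<Sum>h\<in>PiE (T \<union> R) (\<lambda>_. Al). g (restrict h T))"
    by (simp only: sum_constant)
  also have "(\<Sum>h\<in>PiE (T \<union> R) (\<lambda>_. Al). g (restrict h T)) = real (card Al) ^ card R * (\<Sum>p\<in>PiE T (\<lambda>_. Al). g p)"
    using insert.IH insert.prems by blast
  finally show ?case using insert by simp
qed

lemma sum_PiE_restrict:
  fixes g :: "('x \<Rightarrow> 'a) \<Rightarrow> real"
  assumes "finite W" "T \<subseteq> W"
  shows "(\<Sum>w\<in>PiE W (\<lambda>_. Al). g (restrict w T))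
         = real (card Al) ^ (card W - card T) * (\<Sum>p\<in>PiE T (\<lambda>_. Al). g p)"
proof -
  have "W = T \<union> (W - T)" using assms by auto
  moreover have "card (W - T) = card W - card T"
    using assms by (simp add: card_Diff_subset finite_subset)
  ultimately show ?thesis
    using sum_PiE_restrict_aux[of "W - T" T g Al] assms by auto
qed

lemma sum_PiE_single:
  fixes \<phi> :: "'a \<Rightarrow> real"
  shows "(\<Sum>p\<in>PiE {x} (\<lambda>_. Al). \<phi> (p x)) = (\<Sum>a\<in>Al. \<phi> a)"
proof (rule sum.reindex_bij_witness[where i = "\<lambda>a. (\<lambda>y. if y = x then a else undefined)" and j = "\<lambda>p. p x"])
  fix p assume "p \<in> PiE {x} (\<lambda>_. Al)"
  then show "(\<lambda>y. if y = x then p x else undefined) = p"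
    by (auto simp: fun_eq_iff PiE_def extensional_def)
qed (auto simp: PiE_def extensional_def)

lemma sum_PiE_translate:
  fixes g :: "('x::ab_group_add \<Rightarrow> 'a) \<Rightarrow> real"
  shows "(\<Sum>q\<in>PiE ((\<lambda>b. b + x) ` B) (\<lambda>_. Al). g (restrict (\<lambda>b. q (b + x)) B))
       = (\<Sum>p\<in>PiE B (\<lambda>_. Al). g p)"
proof (rule sum.reindex_bij_witness[where i = "\<lambda>p. restrict (\<lambda>y. p (y - x)) ((\<lambda>b. b + x) ` B)"
      and j = "\<lambda>q. restrict (\<lambda>b. q (b + x)) B"])
  fix q assume q: "q \<in> PiE ((\<lambda>b. b + x) ` B) (\<lambda>_. Al)"
  show "restrict (\<lambda>y. restrict (\<lambda>b. q (b + x)) B (y - x)) ((\<lambda>b. b + x) ` B) = q"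
  proof
    fix y show "restrict (\<lambda>y. restrict (\<lambda>b. q (b + x)) B (y - x)) ((\<lambda>b. b + x) ` B) y = q y"
      using q by (cases "y \<in> (\<lambda>b. b + x) ` B") (auto simp: PiE_def extensional_def)
  qed
next
  fix p assume p: "p \<in> PiE B (\<lambda>_. Al)"
  show "restrict (\<lambda>b. restrict (\<lambda>y. p (y - x)) ((\<lambda>b. b + x) ` B) (b + x)) B = p"
  proof
    fix y show "restrict (\<lambda>b. restrict (\<lambda>y. p (y - x)) ((\<lambda>b. b + x) ` B) (b + x)) B y = p y"
      using p by (cases "y \<in> B") (auto simp: PiE_def extensional_def)
  qed
qed (auto simp: PiE_def extensional_def)

definition nsm :: "nat \<Rightarrow> 'x::ab_group_add \<Rightarrow> 'x" where
  "nsm k d = (\<Sum>i<k. d)"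

definition Wn :: "'x::ab_group_add set \<Rightarrow> nat \<Rightarrow> 'x set" where
  "Wn D n = (\<lambda>k. \<Sum>d\<in>D. nsm (k d) d) ` PiE D (\<lambda>_. {..<n})"

lemma Wn_finite: "finite D \<Longrightarrow> finite (Wn D n)"
  unfolding Wn_def by (simp add: finite_PiE)

lemma Wn_card: "finite D \<Longrightarrow> card (Wn D n) \<le> n ^ card D"
proof -
  assume D: "finite D"
  have "card (Wn D n) \<le> card (PiE D (\<lambda>_. {..<n}))"
    unfolding Wn_def by (rule card_image_le) (simp add: D finite_PiE)
  also have "\<dots> = n ^ card D" using D by (simp add: card_PiE)
  finally show ?thesis .
qed

lemma Wn_zero: "0 \<in> Wn D (Suc n)"
proof -
  have m: "(\<lambda>d\<in>D. 0) \<in> PiE D (\<lambda>_. {..<Suc n})" by auto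
  have "0 = (\<Sum>d\<in>D. nsm ((\<lambda>d\<in>D. 0) d) d)" by (intro sum.neutral[symmetric]) (simp add: nsm_def)
  then show ?thesis unfolding Wn_def using m by (rule image_eqI)
qed

lemma Wn_mono: "Wn D n \<subseteq> Wn D (Suc n)"
  unfolding Wn_def by (intro image_mono PiE_mono) auto

lemma Wn_shift:
  assumes "finite D" "d0 \<in> D"
  shows "(\<lambda>y. y + d0) ` Wn D n \<subseteq> Wn D (Suc n)"
proof
  fix z assume "z \<in> (\<lambda>y. y + d0) ` Wn D n"
  then obtain k where k: "k \<in> PiE D (\<lambda>_. {..<n})" and z: "z = (\<Sum>d\<in>D. nsm (k d) d) + d0"
    unfolding Wn_def by auto
  define k' where "k' = k(d0 := Suc (k d0))"
  have k': "k' \<in> PiE D (\<lambda>_. {..<Suc n})" using k assms unfolding k'_def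
    by (auto simp: PiE_def extensional_def Pi_def)
  have "(\<Sum>d\<in>D. nsm (k' d) d) = nsm (k' d0) d0 + (\<Sum>d\<in>D - {d0}. nsm (k' d) d)"
    using assms by (simp add: sum.remove)
  also have "(\<Sum>d\<in>D - {d0}. nsm (k' d) d) = (\<Sum>d\<in>D - {d0}. nsm (k d) d)"
    by (intro sum.cong) (auto simp: k'_def)
  also have "nsm (k' d0) d0 = nsm (k d0) d0 + d0" by (simp add: k'_def nsm_def add.commute)
  also have "nsm (k d0) d0 + d0 + (\<Sum>d\<in>D - {d0}. nsm (k d) d) = (\<Sum>d\<in>D. nsm (k d) d) + d0"
    using assms by (simp add: sum.remove algebra_simps)
  finally have "z = (\<Sum>d\<in>D. nsm (k' d) d)" using z by simp
  then show "z \<in> Wn D (Suc n)" using k' unfolding Wn_def by blast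
qed

lemma Wn_pos: "finite D \<Longrightarrow> n \<ge> 1 \<Longrightarrow> card (Wn D n) \<ge> 1"
proof -
  assume D: "finite D" and n: "n \<ge> 1"
  then obtain m where m: "n = Suc m" by (cases n) auto
  have "0 \<in> Wn D n" using Wn_zero[of D m] m by simp
  then have "card (Wn D n) > 0" using Wn_finite[OF D, of n] card_gt_0_iff by blast
  then show ?thesis by simp
qed

lemma poly_geom_lim:
  fixes x :: real
  assumes "0 < x" "x < 1"
  shows "(\<lambda>n. real n ^ m * x ^ n) \<longlonglongrightarrow> 0"
  using assms
proof (induction m arbitrary: x)
  case 0
  then show ?case by (simp add: LIMSEQ_power_zero)
next
  case (Suc m)
  define y where "y = sqrt x"
  have y: "0 < y" "y < 1" "x = y * y" using Suc.prems by (auto simp: y_def)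
  have "(\<lambda>n. (real n * y ^ n) * (real n ^ m * y ^ n)) \<longlonglongrightarrow> 0 * 0"
    by (intro tendsto_mult Suc.IH powser_times_n_limit_0) (use y in auto)
  moreover have "(\<lambda>n. (real n * y ^ n) * (real n ^ m * y ^ n)) = (\<lambda>n. real n ^ Suc m * x ^ n)"
    by (auto simp: fun_eq_iff y(3) power_mult_distrib)
  ultimately show ?case by simp
qed

lemma poly_exp_lim:
  fixes e :: real
  assumes "e > 0"
  shows "((\<lambda>n. real (n+1) ^ m / (1+e)^n) \<longlongrightarrow> 0) at_top"
proof -
  define x where "x = 1 / (1 + e)"
  have x: "0 < x" "x < 1" using assms by (auto simp: x_def)
  have "(\<lambda>n. real (Suc n) ^ m * x ^ Suc n) \<longlonglongrightarrow> 0"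
    using LIMSEQ_Suc[OF poly_geom_lim[OF x, of m]] by simp
  then have "(\<lambda>n. (real (Suc n) ^ m * x ^ Suc n) * (1 + e)) \<longlonglongrightarrow> 0 * (1 + e)"
    by (intro tendsto_mult tendsto_const)
  moreover have "(\<lambda>n. (real (Suc n) ^ m * x ^ Suc n) * (1 + e)) = (\<lambda>n. real (n+1) ^ m / (1+e)^n)"
  proof
    fix n
    have x1: "x * (1 + e) = 1" using assms by (simp add: x_def)
    have "(real (Suc n) ^ m * x ^ Suc n) * (1 + e) = real (Suc n) ^ m * x ^ n * (x * (1 + e))"
      by (simp add: algebra_simps)
    also have "\<dots> = real (n+1) ^ m * (1 / (1 + e)) ^ n" using assms by (simp add: x1 x_def)
    also have "\<dots> = real (n+1) ^ m / (1+e)^n" by (simp add: power_one_over)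
    finally show "(real (Suc n) ^ m * x ^ Suc n) * (1 + e) = real (n+1) ^ m / (1+e)^n" .
  qed
  ultimately show ?thesis by simp
qed

lemma folner:
  fixes e :: real
  assumes "finite D" "e > 0"
  shows "\<exists>n\<ge>1. real (card (Wn D (Suc n))) \<le> (1 + e) * real (card (Wn D n))"
proof (rule ccontr)
  assume nt: "\<not> ?thesis"
  have H: "real (card (Wn D (Suc n))) > (1 + e) * real (card (Wn D n))" if "n \<ge> 1" for n
  proof -
    have "\<not> real (card (Wn D (Suc n))) \<le> (1 + e) * real (card (Wn D n))" using nt that by blast
    then show ?thesis by simp
  qed
  have G: "real (card (Wn D (Suc n))) \<ge> (1 + e) ^ n" for n
  proof (induction n)
    case 0 then show ?case using Wn_pos[OF assms(1), of 1] by simp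
  next
    case (Suc n)
    have "(1 + e) ^ Suc n = (1 + e) * (1 + e) ^ n" by simp
    also have "\<dots> \<le> (1 + e) * real (card (Wn D (Suc n)))"
      using Suc assms(2) by (intro mult_left_mono) auto
    also have "\<dots> < real (card (Wn D (Suc (Suc n))))" using H[of "Suc n"] by simp
    finally show ?case by simp
  qed
  have lim: "((\<lambda>n. real (n+1) ^ card D / (1+e)^n) \<longlongrightarrow> 0) at_top"
    using poly_exp_lim[OF assms(2)] .
  then have "eventually (\<lambda>n. real (n+1) ^ card D / (1+e)^n < 1) at_top"
    by (rule order_tendstoD) simp
  then obtain N where "\<forall>n\<ge>N. real (n+1) ^ card D / (1+e)^n < 1"
    by (auto simp: eventually_at_top_linorder)
  then have n: "real (N+1) ^ card D / (1+e)^N < 1" by simp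
  have pos: "(1+e)^N > 0" using assms(2) by simp
  have lt: "real (N+1) ^ card D < (1+e)^N" using n pos by (simp add: divide_less_eq)
  have "(1 + e) ^ N \<le> real (card (Wn D (Suc N)))" by (rule G)
  also have "\<dots> \<le> real (Suc N ^ card D)" using Wn_card[OF assms(1), of "Suc N"] by linarith
  finally have "(1 + e) ^ N \<le> real (N+1) ^ card D" by simp
  with lt show False by simp
qed



lemma sum_PiE_point:
  fixes \<phi> :: "'a \<Rightarrow> real"
  assumes "finite W" "x \<in> W"
  shows "(\<Sum>w\<in>PiE W (\<lambda>_. Al). \<phi> (w x)) = real (card Al) ^ (card W - 1) * (\<Sum>a\<in>Al. \<phi> a)"
proof -
  have "(\<Sum>w\<in>PiE W (\<lambda>_. Al). \<phi> (w x)) = (\<Sum>w\<in>PiE W (\<lambda>_. Al). (\<lambda>q. \<phi> (q x)) (restrict w {x}))"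
    by simp
  also have "\<dots> = real (card Al) ^ (card W - card {x}) * (\<Sum>p\<in>PiE {x} (\<lambda>_. Al). \<phi> (p x))"
    by (rule sum_PiE_restrict) (use assms in auto)
  also have "\<dots> = real (card Al) ^ (card W - 1) * (\<Sum>a\<in>Al. \<phi> a)"
    by (simp add: sum_PiE_single)
  finally show ?thesis .
qed

lemma sum_PiE_window:
  fixes \<phi> :: "'a \<Rightarrow> real" and B W :: "'x::ab_group_add set"
  assumes "finite W" "finite B" "\<forall>b\<in>B. b + x \<in> W"
  shows "(\<Sum>w\<in>PiE W (\<lambda>_. Al). \<phi> (f (restrict (\<lambda>b. w (b + x)) B)))
       = real (card Al) ^ (card W - card B) * (\<Sum>p\<in>PiE B (\<lambda>_. Al). \<phi> (f p))"
proof -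
  define Bx where "Bx = (\<lambda>b. b + x) ` B"
  define G where "G = (\<lambda>q. \<phi> (f (restrict (\<lambda>b. q (b + x)) B)))"
  have BxW: "Bx \<subseteq> W" using assms by (auto simp: Bx_def)
  have cBx: "card Bx = card B" unfolding Bx_def by (rule card_image) (simp add: inj_on_def)
  have "(\<Sum>w\<in>PiE W (\<lambda>_. Al). \<phi> (f (restrict (\<lambda>b. w (b + x)) B)))
      = (\<Sum>w\<in>PiE W (\<lambda>_. Al). G (restrict w Bx))"
  proof (intro sum.cong refl)
    fix w assume "w \<in> PiE W (\<lambda>_. Al)"
    have "restrict (\<lambda>b. restrict w Bx (b + x)) B = restrict (\<lambda>b. w (b + x)) B"
      by (auto simp: restrict_def Bx_def fun_eq_iff)
    then show "\<phi> (f (restrict (\<lambda>b. w (b + x)) B)) = G (restrict w Bx)" by (simp add: G_def)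
  qed
  also have "\<dots> = real (card Al) ^ (card W - card Bx) * (\<Sum>q\<in>PiE Bx (\<lambda>_. Al). G q)"
    by (rule sum_PiE_restrict[OF assms(1) BxW])
  also have "(\<Sum>q\<in>PiE Bx (\<lambda>_. Al). G q) = (\<Sum>p\<in>PiE B (\<lambda>_. Al). \<phi> (f p))"
    unfolding G_def Bx_def by (rule sum_PiE_translate)
  finally show ?thesis unfolding cBx .
qed

lemma main_count:
  fixes \<phi> :: "'a \<Rightarrow> real" and B W :: "'x::ab_group_add set"
  assumes Al: "finite Al" "v0 \<in> Al"
    and B: "finite B" "0 \<in> B"
    and fAl: "\<forall>p\<in>PiE B (\<lambda>_. Al). f p \<in> Al"
    and W: "finite W"
    and H: "\<forall>w\<in>PiE W (\<lambda>_. Al). (\<Sum>x\<in>{x. \<exists>b\<in>B. x + b \<in> W}. \<phi> (ca f B (\<lambda>y. if y \<in> W then w y else v0) x)) = (\<Sum>x\<in>W. \<phi> (w x))"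
  shows "\<bar>real (card W) * (\<Sum>a\<in>Al. \<phi> a) / real (card Al) - real (card {x. \<forall>b\<in>B. x + b \<in> W}) * (\<Sum>p\<in>PiE B (\<lambda>_. Al). \<phi> (f p)) / real (card Al) ^ card B\<bar>
     \<le> real (card ({x. \<exists>b\<in>B. x + b \<in> W} - {x. \<forall>b\<in>B. x + b \<in> W})) * (\<Sum>a\<in>Al. \<bar>\<phi> a\<bar>)"
proof -
  define E where "E = {x. \<exists>b\<in>B. x + b \<in> W}"
  define I where "I = {x. \<forall>b\<in>B. x + b \<in> W}"
  define P where "P = PiE W (\<lambda>_. Al)"
  define A where "A = real (card Al)"
  define N where "N = A ^ card W"
  define S where "S = (\<Sum>p\<in>PiE B (\<lambda>_. Al). \<phi> (f p))"
  define M where "M = (\<Sum>a\<in>Al. \<bar>\<phi> a\<bar>)"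
  define c where "c = (\<lambda>w y. if y \<in> W then w y else v0)"
  define T where "T = (\<lambda>x. \<Sum>w\<in>P. \<phi> (ca f B (c w) x))"
  have A0: "A > 0" using Al by (auto simp: A_def card_gt_0_iff)
  have N0: "N > 0" using A0 by (simp add: N_def)
  have cardP: "real (card P) = N"
    using W by (simp add: P_def N_def A_def card_PiE)
  have Esub: "E \<subseteq> (\<Union>b\<in>B. (\<lambda>y. y - b) ` W)"
    by (auto simp: E_def) (metis add_diff_cancel image_eqI)
  have finE: "finite E" using finite_subset[OF Esub] B W by blast
  have IE: "I \<subseteq> E" using B by (auto simp: I_def E_def)
  have IW: "I \<subseteq> W" using B by (auto simp: I_def)
  have fin: "finite P" using W Al by (simp add: P_def finite_PiE)
  have L: "(\<Sum>w\<in>P. \<Sum>x\<in>W. \<phi> (w x)) = real (card W) * N * (\<Sum>a\<in>Al. \<phi> a) / A"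
  proof -
    have "(\<Sum>w\<in>P. \<Sum>x\<in>W. \<phi> (w x)) = (\<Sum>x\<in>W. \<Sum>w\<in>P. \<phi> (w x))" by (rule sum.swap)
    also have "\<dots> = (\<Sum>x\<in>W. A ^ (card W - 1) * (\<Sum>a\<in>Al. \<phi> a))"
      by (intro sum.cong refl) (simp add: P_def A_def sum_PiE_point W)
    also have "\<dots> = real (card W) * A ^ (card W - 1) * (\<Sum>a\<in>Al. \<phi> a)" by simp
    also have "real (card W) * A ^ (card W - 1) = real (card W) * N / A"
    proof (cases "card W")
      case 0 then show ?thesis by simp
    next
      case (Suc k) then show ?thesis using A0 by (simp add: N_def)
    qed
    finally show ?thesis by simp
  qed
  have TI: "T x = N * S / A ^ card B" if x: "x \<in> I" for x
  proof -
    have xb: "\<forall>b\<in>B. b + x \<in> W" using x by (auto simp: I_def add.commute)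
    have "T x = (\<Sum>w\<in>P. \<phi> (f (restrict (\<lambda>b. w (b + x)) B)))"
      unfolding T_def ca_def
    proof (intro sum.cong refl)
      fix w assume "w \<in> P"
      have "restrict (\<lambda>b. c w (b + x)) B = restrict (\<lambda>b. w (b + x)) B"
        using xb by (auto simp: restrict_def c_def fun_eq_iff)
      then show "\<phi> (f (restrict (\<lambda>b. c w (b + x)) B)) = \<phi> (f (restrict (\<lambda>b. w (b + x)) B))" by simp
    qed
    also have "\<dots> = A ^ (card W - card B) * S"
      unfolding P_def A_def S_def by (rule sum_PiE_window[OF W B(1) xb])
    also have "\<dots> = N * S / A ^ card B"
    proof -
      have "(\<lambda>b. b + x) ` B \<subseteq> W" using xb by auto
      then have "card ((\<lambda>b. b + x) ` B) \<le> card W" using W by (simp add: card_mono)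
      moreover have "card ((\<lambda>b. b + x) ` B) = card B" by (rule card_image) (simp add: inj_on_def)
      ultimately have le: "card B \<le> card W" by simp
      have "A ^ card W = A ^ (card W - card B) * A ^ card B"
        using le by (simp add: power_add[symmetric])
      then show ?thesis using A0 by (simp add: N_def field_simps)
    qed
    finally show ?thesis .
  qed
  have TEI: "\<bar>T x\<bar> \<le> N * M" for x
  proof -
    have "\<bar>T x\<bar> \<le> (\<Sum>w\<in>P. \<bar>\<phi> (ca f B (c w) x)\<bar>)" unfolding T_def by (rule sum_abs)
    also have "\<dots> \<le> (\<Sum>w\<in>P. M)"
    proof (rule sum_mono)
      fix w assume w: "w \<in> P"
      have "restrict (\<lambda>b. c w (b + x)) B \<in> PiE B (\<lambda>_. Al)"
        using w Al by (auto simp: P_def c_def PiE_def Pi_def)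
      then have "ca f B (c w) x \<in> Al" using fAl by (simp add: ca_def)
      then show "\<bar>\<phi> (ca f B (c w) x)\<bar> \<le> M"
        unfolding M_def by (rule member_le_sum) (use Al in auto)
    qed
    also have "\<dots> = N * M" using cardP by simp
    finally show ?thesis .
  qed
  have "(\<Sum>w\<in>P. \<Sum>x\<in>W. \<phi> (w x)) = (\<Sum>w\<in>P. \<Sum>x\<in>E. \<phi> (ca f B (c w) x))"
  proof (rule sum.cong[OF refl])
    fix w assume "w \<in> P"
    then show "(\<Sum>x\<in>W. \<phi> (w x)) = (\<Sum>x\<in>E. \<phi> (ca f B (c w) x))"
      using H by (simp add: P_def E_def c_def)
  qed
  also have "\<dots> = (\<Sum>x\<in>E. T x)" unfolding T_def by (rule sum.swap)
  also have "\<dots> = (\<Sum>x\<in>I. T x) + (\<Sum>x\<in>E - I. T x)"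
    using sum.subset_diff[OF IE finE] by (simp add: add.commute)
  also have "(\<Sum>x\<in>I. T x) = real (card I) * (N * S / A ^ card B)"
    using TI by simp
  finally have eq: "real (card W) * N * (\<Sum>a\<in>Al. \<phi> a) / A
      = real (card I) * (N * S / A ^ card B) + (\<Sum>x\<in>E - I. T x)" using L by simp
  have R: "\<bar>\<Sum>x\<in>E - I. T x\<bar> \<le> real (card (E - I)) * (N * M)"
  proof -
    have "\<bar>\<Sum>x\<in>E - I. T x\<bar> \<le> (\<Sum>x\<in>E - I. \<bar>T x\<bar>)" by (rule sum_abs)
    also have "\<dots> \<le> (\<Sum>x\<in>E - I. N * M)" by (rule sum_mono) (rule TEI)
    finally show ?thesis by simp
  qed
  define X where "X = real (card W) * (\<Sum>a\<in>Al. \<phi> a) / A - real (card I) * S / A ^ card B"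
  have eqN: "(\<Sum>x\<in>E - I. T x) = N * X" using eq N0 A0 unfolding X_def by (simp add: field_simps)
  have "N * \<bar>X\<bar> \<le> N * (real (card (E - I)) * M)"
    using R N0 unfolding eqN by (simp add: abs_mult mult.commute mult.left_commute)
  then have "\<bar>X\<bar> \<le> real (card (E - I)) * M" using N0 by simp
  then have "\<bar>real (card W) * (\<Sum>a\<in>Al. \<phi> a) / A - real (card I) * S / A ^ card B\<bar>
      \<le> real (card (E - I)) * M" by (simp add: X_def)
  then show ?thesis by (simp add: E_def I_def A_def S_def M_def)
qed



lemma delta_le0:
  fixes d C :: real
  assumes "C \<ge> 0" "\<And>e. e > 0 \<Longrightarrow> d \<le> C * e"
  shows "d \<le> 0"
proof (rule ccontr)
  assume "\<not> d \<le> 0"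
  then have d: "d > 0" by simp
  define e where "e = d / (2 * (C + 1))"
  have e: "e > 0" using d assms(1) by (simp add: e_def)
  have "C * e = d * (C / (2 * (C + 1)))" by (simp add: e_def)
  also have "\<dots> < d * 1"
    using d assms(1) by (intro mult_strict_left_mono) (simp_all add: field_simps)
  finally show False using assms(2)[OF e] by simp
qed

lemma boundary_bound:
  fixes B W W' :: "'x::ab_group_add set"
  assumes "finite W'" "W \<subseteq> W'" "finite B"
    and sh: "\<forall>b\<in>B. \<forall>b'\<in>B. (\<lambda>y. y + (b' - b)) ` W \<subseteq> W'"
  shows "card ({x. \<exists>b\<in>B. x + b \<in> W} - {x. \<forall>b\<in>B. x + b \<in> W}) \<le> card B * (card W' - card W)"
proof -
  have sub: "{x. \<exists>b\<in>B. x + b \<in> W} - {x. \<forall>b\<in>B. x + b \<in> W} \<subseteq> (\<Union>b'\<in>B. (\<lambda>y. y - b') ` (W' - W))"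
  proof
    fix x assume "x \<in> {x. \<exists>b\<in>B. x + b \<in> W} - {x. \<forall>b\<in>B. x + b \<in> W}"
    then obtain b b' where b: "b \<in> B" "x + b \<in> W" and b': "b' \<in> B" "x + b' \<notin> W" by auto
    have "(x + b) + (b' - b) \<in> W'" using sh b b' by blast
    then have "x + b' \<in> W' - W" using b' by (simp add: algebra_simps)
    then have "x \<in> (\<lambda>y. y - b') ` (W' - W)" by (rule rev_image_eqI) simp
    then show "x \<in> (\<Union>b'\<in>B. (\<lambda>y. y - b') ` (W' - W))" using b' by blast
  qed
  have fW: "finite W" using assms finite_subset by blast
  have "card ({x. \<exists>b\<in>B. x + b \<in> W} - {x. \<forall>b\<in>B. x + b \<in> W}) \<le> card (\<Union>b'\<in>B. (\<lambda>y. y - b') ` (W' - W))"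
    by (rule card_mono[OF _ sub]) (use assms in auto)
  also have "\<dots> \<le> (\<Sum>b'\<in>B. card ((\<lambda>y. y - b') ` (W' - W)))" by (rule card_UN_le) (rule assms)
  also have "\<dots> \<le> (\<Sum>b'\<in>B. card (W' - W))" by (intro sum_mono card_image_le) (use assms in auto)
  also have "\<dots> = card B * (card W' - card W)" using assms fW by (simp add: card_Diff_subset)
  finally show ?thesis .
qed

lemma conservedD:
  assumes "conserved Al f B \<phi>" "\<forall>x. c x \<in> Al" "finite {x. \<phi> (c x) \<noteq> 0}"
  shows "finite {x. \<phi> (ca f B c x) \<noteq> 0}"
    "(\<Sum>x\<in>{x. \<phi> (ca f B c x) \<noteq> 0}. \<phi> (ca f B c x)) = (\<Sum>x\<in>{x. \<phi> (c x) \<noteq> 0}. \<phi> (c x))"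
  using assms unfolding conserved_def by auto

lemma part1:
  fixes Al :: "'a set" and B :: "'x::ab_group_add set"
    and f :: "('x \<Rightarrow> 'a) \<Rightarrow> 'a" and \<phi> :: "'a \<Rightarrow> real"
  assumes finAl: "finite Al"
    and finB: "finite B" and B0: "0 \<in> B"
    and fAl: "\<forall>p\<in>PiE B (\<lambda>_. Al). f p \<in> Al"
    and vac: "finite (UNIV :: 'x set) \<or> (\<exists>v\<in>Al. \<phi> v = 0)"
    and cons: "conserved Al f B \<phi>"
  shows "(\<Sum>p\<in>PiE B (\<lambda>_. Al). \<phi> (f p)) = real (card Al) ^ (card B - 1) * (\<Sum>a\<in>Al. \<phi> a)"
proof (cases "Al = {}")
  case True
  then have "PiE B (\<lambda>_. Al) = {}" using B0 by (simp add: PiE_eq_empty_iff)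
  then show ?thesis using True by simp
next
  case False
  define A where "A = real (card Al)"
  define S where "S = (\<Sum>p\<in>PiE B (\<lambda>_. Al). \<phi> (f p))"
  define Sp where "Sp = (\<Sum>a\<in>Al. \<phi> a)"
  define M where "M = (\<Sum>a\<in>Al. \<bar>\<phi> a\<bar>)"
  define X where "X = Sp / A - S / A ^ card B"
  define K where "K = M + \<bar>S\<bar> / A ^ card B"
  have A0: "A > 0" using False finAl by (auto simp: A_def card_gt_0_iff)
  have K0: "K \<ge> 0" unfolding K_def M_def using A0 by (auto intro: sum_nonneg)
  have "card B > 0" using B0 finB card_gt_0_iff by blast
  then have cB: "card B \<ge> 1" by simp
  have gen: "real (card W) * \<bar>X\<bar> \<le> real (card ({x. \<exists>b\<in>B. x + b \<in> W} - {x. \<forall>b\<in>B. x + b \<in> W})) * K"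
    if W: "finite W" and v0: "v0 \<in> Al"
      and H: "\<forall>w\<in>PiE W (\<lambda>_. Al). (\<Sum>x\<in>{x. \<exists>b\<in>B. x + b \<in> W}. \<phi> (ca f B (\<lambda>y. if y \<in> W then w y else v0) x)) = (\<Sum>x\<in>W. \<phi> (w x))"
    for W v0
  proof -
    define E where "E = {x. \<exists>b\<in>B. x + b \<in> W}"
    define I where "I = {x. \<forall>b\<in>B. x + b \<in> W}"
    define p where "p = Sp / A"
    define s where "s = S / A ^ card B"
    have mc0: "\<bar>real (card W) * Sp / A - real (card I) * S / A ^ card B\<bar> \<le> real (card (E - I)) * M"
      using main_count[OF finAl v0 finB B0 fAl W H] unfolding E_def I_def A_def S_def Sp_def M_def .
    have mc: "\<bar>real (card W) * p - real (card I) * s\<bar> \<le> real (card (E - I)) * M"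
      using mc0 unfolding p_def s_def by simp
    have IW: "I \<subseteq> W" using B0 by (auto simp: I_def)
    have WE: "W \<subseteq> E" unfolding E_def using B0 by force
    have Esub: "E \<subseteq> (\<Union>b\<in>B. (\<lambda>y. y - b) ` W)"
      by (auto simp: E_def) (metis add_diff_cancel image_eqI)
    have finE: "finite E" using finite_subset[OF Esub] finB W by blast
    have cI: "card I \<le> card W" using IW W card_mono by blast
    have c1: "real (card W) - real (card I) \<le> real (card (E - I))"
    proof -
      have "card (W - I) \<le> card (E - I)" using WE finE by (intro card_mono) auto
      moreover have "card (W - I) = card W - card I" using IW W by (simp add: card_Diff_subset finite_subset)
      ultimately show ?thesis using cI by linarith
    qed
    have eqX: "real (card W) * X = (real (card W) * p - real (card I) * s)
        - (real (card W) - real (card I)) * s"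
      by (simp add: X_def p_def s_def algebra_simps)
    have t: "real (card W) * \<bar>X\<bar> \<le> \<bar>real (card W) * p - real (card I) * s\<bar>
        + (real (card W) - real (card I)) * \<bar>s\<bar>"
    proof -
      have "real (card W) * \<bar>X\<bar> = \<bar>real (card W) * X\<bar>" by (simp add: abs_mult)
      also have "\<dots> \<le> \<bar>real (card W) * p - real (card I) * s\<bar> + \<bar>(real (card W) - real (card I)) * s\<bar>"
        unfolding eqX by (rule abs_triangle_ineq4)
      also have "\<bar>(real (card W) - real (card I)) * s\<bar> = (real (card W) - real (card I)) * \<bar>s\<bar>"
        using cI by (simp add: abs_mult)
      finally show ?thesis .
    qed
    have u: "(real (card W) - real (card I)) * \<bar>s\<bar> \<le> real (card (E - I)) * \<bar>s\<bar>"
      using c1 by (rule mult_right_mono) simp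
    have K': "K = M + \<bar>s\<bar>" using A0 by (simp add: K_def s_def abs_divide)
    have "real (card W) * \<bar>X\<bar> \<le> real (card (E - I)) * M + real (card (E - I)) * \<bar>s\<bar>"
      using t u mc by linarith
    also have "\<dots> = real (card (E - I)) * K" by (simp add: K' distrib_left)
    finally show ?thesis by (simp add: E_def I_def)
  qed
  have X0: "X = 0"
  proof (cases "finite (UNIV :: 'x set)")
    case True
    obtain v0 where v0: "v0 \<in> Al" using False by blast
    have H: "\<forall>w\<in>PiE UNIV (\<lambda>_. Al). (\<Sum>x\<in>{x. \<exists>b\<in>B. x + b \<in> UNIV}. \<phi> (ca f B (\<lambda>y. if y \<in> UNIV then w y else v0) x)) = (\<Sum>x\<in>UNIV. \<phi> (w x))"
    proof
      fix w assume w: "w \<in> PiE (UNIV :: 'x set) (\<lambda>_. Al)"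
      have wAl: "\<forall>x. w x \<in> Al" using w by auto
      have c: "(\<lambda>y. if y \<in> UNIV then w y else v0) = w" by simp
      have E: "{x. \<exists>b\<in>B. x + b \<in> (UNIV :: 'x set)} = UNIV" using B0 by auto
      have fin: "finite {x. \<phi> (w x) \<noteq> 0}" by (rule finite_subset[OF subset_UNIV True])
      have eq: "(\<Sum>x\<in>{x. \<phi> (ca f B w x) \<noteq> 0}. \<phi> (ca f B w x)) = (\<Sum>x\<in>{x. \<phi> (w x) \<noteq> 0}. \<phi> (w x))"
        by (rule conservedD(2)[OF cons wAl fin])
      have "(\<Sum>x\<in>{x. \<phi> (ca f B w x) \<noteq> 0}. \<phi> (ca f B w x)) = (\<Sum>x\<in>UNIV. \<phi> (ca f B w x))"
        by (rule sum.mono_neutral_left) (use True in auto)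
      moreover have "(\<Sum>x\<in>{x. \<phi> (w x) \<noteq> 0}. \<phi> (w x)) = (\<Sum>x\<in>UNIV. \<phi> (w x))"
        by (rule sum.mono_neutral_left) (use True in auto)
      ultimately show "(\<Sum>x\<in>{x. \<exists>b\<in>B. x + b \<in> UNIV}. \<phi> (ca f B (\<lambda>y. if y \<in> UNIV then w y else v0) x)) = (\<Sum>x\<in>UNIV. \<phi> (w x))"
        using eq unfolding c E by simp
    qed
    have g: "real (card (UNIV :: 'x set)) * \<bar>X\<bar> \<le> real (card ({x. \<exists>b\<in>B. x + b \<in> (UNIV :: 'x set)} - {x. \<forall>b\<in>B. x + b \<in> (UNIV :: 'x set)})) * K"
      by (rule gen[OF True v0 H])
    have "card (UNIV :: 'x set) > 0" using True by (simp add: card_gt_0_iff)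
    then show ?thesis using g by (simp add: mult_le_0_iff)
  next
    case inf: False
    then obtain v where v: "v \<in> Al" "\<phi> v = 0" using vac by blast
    have z: "\<phi> (f (restrict (\<lambda>b. v) B)) = 0"
    proof (rule ccontr)
      assume nz: "\<phi> (f (restrict (\<lambda>b. v) B)) \<noteq> 0"
      have "finite {x. \<phi> (ca f B (\<lambda>_. v) x) \<noteq> 0}" by (rule conservedD(1)[OF cons]) (use v in auto)
      moreover have "{x. \<phi> (ca f B (\<lambda>_. v) x) \<noteq> 0} = UNIV" using nz by (simp add: ca_def)
      ultimately show False using inf by simp
    qed
    have H: "\<forall>w\<in>PiE W (\<lambda>_. Al). (\<Sum>x\<in>{x. \<exists>b\<in>B. x + b \<in> W}. \<phi> (ca f B (\<lambda>y. if y \<in> W then w y else v) x)) = (\<Sum>x\<in>W. \<phi> (w x))"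
      if W: "finite W" for W
    proof
      fix w assume w: "w \<in> PiE W (\<lambda>_. Al)"
      define c where "c = (\<lambda>y. if y \<in> W then w y else v)"
      define E where "E = {x. \<exists>b\<in>B. x + b \<in> W}"
      have Esub: "E \<subseteq> (\<Union>b\<in>B. (\<lambda>y. y - b) ` W)"
        by (auto simp: E_def) (metis add_diff_cancel image_eqI)
      have finE: "finite E" using finite_subset[OF Esub] finB W by blast
      have cAl: "\<forall>x. c x \<in> Al" using w v by (auto simp: c_def)
      have supc: "{x. \<phi> (c x) \<noteq> 0} \<subseteq> W" using v by (auto simp: c_def split: if_splits)
      have fin: "finite {x. \<phi> (c x) \<noteq> 0}" by (rule finite_subset[OF supc W])
      have eq: "(\<Sum>x\<in>{x. \<phi> (ca f B c x) \<noteq> 0}. \<phi> (ca f B c x)) = (\<Sum>x\<in>{x. \<phi> (c x) \<noteq> 0}. \<phi> (c x))"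
        by (rule conservedD(2)[OF cons cAl fin])
      have supF: "{x. \<phi> (ca f B c x) \<noteq> 0} \<subseteq> E"
      proof
        fix x assume x: "x \<in> {x. \<phi> (ca f B c x) \<noteq> 0}"
        show "x \<in> E"
        proof (rule ccontr)
          assume "x \<notin> E"
          then have "\<forall>b\<in>B. x + b \<notin> W" by (simp add: E_def)
          then have "restrict (\<lambda>b. c (b + x)) B = restrict (\<lambda>b. v) B"
            by (auto simp: restrict_def c_def fun_eq_iff add.commute)
          then have "\<phi> (ca f B c x) = 0" using z by (simp add: ca_def)
          then show False using x by simp
        qed
      qed
      have "(\<Sum>x\<in>{x. \<phi> (ca f B c x) \<noteq> 0}. \<phi> (ca f B c x)) = (\<Sum>x\<in>E. \<phi> (ca f B c x))"
        by (rule sum.mono_neutral_left[OF finE supF]) auto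
      moreover have "(\<Sum>x\<in>{x. \<phi> (c x) \<noteq> 0}. \<phi> (c x)) = (\<Sum>x\<in>W. \<phi> (c x))"
        by (rule sum.mono_neutral_left[OF W supc]) auto
      moreover have "(\<Sum>x\<in>W. \<phi> (c x)) = (\<Sum>x\<in>W. \<phi> (w x))" by (simp add: c_def)
      ultimately show "(\<Sum>x\<in>{x. \<exists>b\<in>B. x + b \<in> W}. \<phi> (ca f B (\<lambda>y. if y \<in> W then w y else v) x)) = (\<Sum>x\<in>W. \<phi> (w x))"
        using eq by (simp add: c_def E_def)
    qed
    define D where "D = (\<lambda>(b, b'). b' - b) ` (B \<times> B)"
    have finD: "finite D" using finB by (simp add: D_def)
    have "\<bar>X\<bar> \<le> 0"
    proof (rule delta_le0)
      show "0 \<le> real (card B) * K" using K0 by simp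
    next
      fix e :: real assume e: "e > 0"
      obtain n where n: "n \<ge> 1" "real (card (Wn D (Suc n))) \<le> (1 + e) * real (card (Wn D n))"
        using folner[OF finD e] by blast
      define W where "W = Wn D n"
      define W' where "W' = Wn D (Suc n)"
      have fW: "finite W" "finite W'" using finD by (simp_all add: W_def W'_def Wn_finite)
      have WW': "W \<subseteq> W'" by (simp add: W_def W'_def Wn_mono)
      have sh: "\<forall>b\<in>B. \<forall>b'\<in>B. (\<lambda>y. y + (b' - b)) ` W \<subseteq> W'"
      proof (intro ballI)
        fix b b' assume "b \<in> B" "b' \<in> B"
        then have "b' - b \<in> D" by (force simp: D_def)
        then show "(\<lambda>y. y + (b' - b)) ` W \<subseteq> W'" unfolding W_def W'_def by (rule Wn_shift[OF finD])
      qed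
      have bd: "card ({x. \<exists>b\<in>B. x + b \<in> W} - {x. \<forall>b\<in>B. x + b \<in> W}) \<le> card B * (card W' - card W)"
        by (rule boundary_bound[OF fW(2) WW' finB sh])
      have cW: "card W \<le> card W'" using WW' fW card_mono by blast
      have bd': "real (card ({x. \<exists>b\<in>B. x + b \<in> W} - {x. \<forall>b\<in>B. x + b \<in> W})) \<le> real (card B) * (e * real (card W))"
      proof -
        have "real (card ({x. \<exists>b\<in>B. x + b \<in> W} - {x. \<forall>b\<in>B. x + b \<in> W})) \<le> real (card B) * (real (card W') - real (card W))"
        proof -
          have "real (card W' - card W) = real (card W') - real (card W)" using cW by (simp add: of_nat_diff)
          moreover have "real (card ({x. \<exists>b\<in>B. x + b \<in> W} - {x. \<forall>b\<in>B. x + b \<in> W})) \<le> real (card B * (card W' - card W))"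
            using bd by (simp only: of_nat_le_iff)
          ultimately show ?thesis by simp
        qed
        also have "\<dots> \<le> real (card B) * (e * real (card W))"
          using n(2) by (intro mult_left_mono) (auto simp: W_def W'_def algebra_simps)
        finally show ?thesis .
      qed
      have g: "real (card W) * \<bar>X\<bar> \<le> real (card ({x. \<exists>b\<in>B. x + b \<in> W} - {x. \<forall>b\<in>B. x + b \<in> W})) * K"
        by (rule gen[OF fW(1) v(1) H[OF fW(1)]])
      also have "\<dots> \<le> real (card B) * (e * real (card W)) * K" using bd' K0 by (rule mult_right_mono)
      finally have "real (card W) * \<bar>X\<bar> \<le> real (card W) * (real (card B) * K * e)" by (simp add: algebra_simps)
      moreover have "real (card W) > 0" using Wn_pos[OF finD n(1)] by (simp add: W_def)
      ultimately show "\<bar>X\<bar> \<le> real (card B) * K * e" by simp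
    qed
    then show ?thesis by simp
  qed
  then have "S / A ^ card B = Sp / A" by (simp add: X_def)
  then have "S = A ^ card B * Sp / A" using A0 by (simp add: field_simps)
  also have "A ^ card B = A ^ (card B - 1) * A"
  proof -
    obtain k where "card B = Suc k" using cB by (cases "card B") auto
    then show ?thesis by (simp add: power_Suc2)
  qed
  finally have "S = A ^ (card B - 1) * Sp" using A0 by simp
  then show ?thesis by (simp add: S_def A_def Sp_def)
qed



lemma gauss_real: "(\<Sum>a\<in>{0..<N}. real a) = real N * (real N - 1) / 2"
  by (induction N) (auto simp: field_simps)

theorem corollary10:
  fixes Al :: "'a set" and B :: "'x::ab_group_add set"
    and f :: "('x \<Rightarrow> 'a) \<Rightarrow> 'a" and \<phi> :: "'a \<Rightarrow> real"
  assumes "finite Al"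
    and "finite B" and "0 \<in> B" and "\<forall>b\<in>B. - b \<in> B"
    and "\<forall>p\<in>PiE B (\<lambda>_. Al). f p \<in> Al"
    and "finite (UNIV :: 'x set) \<or> (\<exists>v\<in>Al. \<phi> v = 0)"
    and "conserved Al f B \<phi>"
  shows "(\<Sum>p\<in>PiE B (\<lambda>_. Al). \<phi> (f p)) = real (card Al) ^ (card B - 1) * (\<Sum>a\<in>Al. \<phi> a)
    \<and> (\<forall>(g :: ('x \<Rightarrow> nat) \<Rightarrow> nat) (N :: nat).
           (\<forall>p\<in>PiE B (\<lambda>_. {0..<N}). g p \<in> {0..<N}) \<and> conserved {0..<N} g B real \<longrightarrow>
           real (\<Sum>p\<in>PiE B (\<lambda>_. {0..<N}). g p) = real N ^ card B * (real N - 1) / 2)"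
proof (intro conjI allI impI)
  show "(\<Sum>p\<in>PiE B (\<lambda>_. Al). \<phi> (f p)) = real (card Al) ^ (card B - 1) * (\<Sum>a\<in>Al. \<phi> a)"
    by (rule part1) (use assms in auto)
next
  fix g :: "('x \<Rightarrow> nat) \<Rightarrow> nat" and N :: nat
  assume h: "(\<forall>p\<in>PiE B (\<lambda>_. {0..<N}). g p \<in> {0..<N}) \<and> conserved {0..<N} g B real"
  have cB: "card B > 0" using assms(2,3) card_gt_0_iff by blast
  show "real (\<Sum>p\<in>PiE B (\<lambda>_. {0..<N}). g p) = real N ^ card B * (real N - 1) / 2"
  proof (cases "N = 0")
    case True
    then have "PiE B (\<lambda>_. {0..<N}) = {}" using assms(3) by (simp add: PiE_eq_empty_iff)
    then show ?thesis using True cB by simp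
  next
    case False
    have "(\<Sum>p\<in>PiE B (\<lambda>_. {0..<N}). real (g p)) = real (card {0..<N}) ^ (card B - 1) * (\<Sum>a\<in>{0..<N}. real a)"
      by (rule part1) (use assms h False in auto)
    also have "\<dots> = real N ^ (card B - 1) * (real N * (real N - 1) / 2)" by (simp add: gauss_real)
    also have "\<dots> = real N ^ card B * (real N - 1) / 2"
    proof -
      obtain k where "card B = Suc k" using cB by (cases "card B") auto
      then show ?thesis by (simp add: algebra_simps)
    qed
    finally show ?thesis by simp
  qed
qed

end
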